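(* Let $n,d\in\mathbb{N}$, let $\mathcal{A}_n=\{0,2,4,\dots,2n-2\}$ and $\mathcal{B}_n=\{1,3,5,\dots,2n-1\}$. Let $X,Y,A,B,\Lambda$ be random variables with joint distribution $P_{XYAB\Lambda}$, where $X$ and $Y$ take values in $\{0,1,\dots,d\}$, such that $P_{X\Lambda|AB}=P_{X\Lambda|A}$, $P_{Y\Lambda|AB}=P_{Y\Lambda|B}$, and $P_{AB\Lambda}=P_A\times P_B\times P_\Lambda$, with $\mathrm{supp}(P_A)\supseteq\mathcal{A}_n$ and $\mathrm{supp}(P_B)\supseteq\mathcal{B}_n$. Then $$\int \mathrm{d}P_\Lambda(\lambda)\sum_{x=0}^{d-1}\Big|P_{X|A\Lambda}(x|0,\lambda)-\frac1d\Big|\le\frac d2\, I_{n,d}(P_{XY|AB}).$$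
   Context: For a conditional distribution $P_{XY|AB}$, define $$I_{n,d}(P_{XY|AB})=2n-\sum_{x=0}^{d-1}P_{XY|AB}(x,x\oplus1|0,2n-1)-\sum_{\substack{a\in\mathcal{A}_n,\,b\in\mathcal{B}_n\\|a-b|=1}}\sum_{x=0}^{d-1}P_{XY|AB}(x,x|a,b),$$ where $\oplus$ denotes addition modulo $d$ on $\{0,\dots,d-1\}$. *)

theory Defs
  imports "HOL-Probability.Probability"
begin

definition A_set :: "nat \<Rightarrow> nat set" where
  "A_set n = {a. even a \<and> a < 2*n}"

definition B_set :: "nat \<Rightarrow> nat set" where
  "B_set n = {b. odd b \<and> b < 2*n}"

text \<open>Hidden-variable model: M is the distribution P_Lambda of Lambda, and
  p l x y a b = P_{XY|AB Lambda}(x,y|a,b,l).\<close>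
definition PXY_AB :: "'l measure \<Rightarrow> ('l \<Rightarrow> nat \<Rightarrow> nat \<Rightarrow> nat \<Rightarrow> nat \<Rightarrow> real)
    \<Rightarrow> nat \<Rightarrow> nat \<Rightarrow> nat \<Rightarrow> nat \<Rightarrow> real" where
  "PXY_AB M p x y a b = (\<integral>l. p l x y a b \<partial>M)"

definition PX_ABL :: "nat \<Rightarrow> ('l \<Rightarrow> nat \<Rightarrow> nat \<Rightarrow> nat \<Rightarrow> nat \<Rightarrow> real)
    \<Rightarrow> 'l \<Rightarrow> nat \<Rightarrow> nat \<Rightarrow> nat \<Rightarrow> real" where
  "PX_ABL d p l x a b = (\<Sum>y\<in>{0..d}. p l x y a b)"

definition PY_ABL :: "nat \<Rightarrow> ('l \<Rightarrow> nat \<Rightarrow> nat \<Rightarrow> nat \<Rightarrow> nat \<Rightarrow> real)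
    \<Rightarrow> 'l \<Rightarrow> nat \<Rightarrow> nat \<Rightarrow> nat \<Rightarrow> real" where
  "PY_ABL d p l y a b = (\<Sum>x\<in>{0..d}. p l x y a b)"

definition I_nd :: "nat \<Rightarrow> nat \<Rightarrow> (nat \<Rightarrow> nat \<Rightarrow> nat \<Rightarrow> nat \<Rightarrow> real) \<Rightarrow> real" where
  "I_nd n d P = 2 * real n
     - (\<Sum>x<d. P x ((x + 1) mod d) 0 (2*n - 1))
     - (\<Sum>a\<in>A_set n. \<Sum>b\<in>B_set n. if a = b + 1 \<or> b = a + 1 then (\<Sum>x<d. P x x a b) else 0)"

end

theory Submission imports Defs begin

lemma shift_sum: "0 < (d::nat) \<Longrightarrow> (\<Sum>x<d. f ((x+1) mod d)) = (\<Sum>x<d. (f x :: real))"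
proof -
  assume "0 < d"
  then obtain m where d: "d = Suc m" by (cases d) auto
  have "(\<Sum>x<Suc m. f ((x+1) mod Suc m)) = (\<Sum>x<m. f ((x+1) mod Suc m)) + f 0"
    by (simp add: sum.lessThan_Suc)
  also have "(\<Sum>x<m. f ((x+1) mod Suc m)) = (\<Sum>x<m. f (Suc x))"
    by (rule sum.cong) auto
  also have "(\<Sum>x<m. f (Suc x)) + f 0 = (\<Sum>x<Suc m. f x)"
    by (subst sum.lessThan_Suc_shift) simp
  finally show ?thesis using d by simp
qed

lemma telescope: "j \<le> k \<Longrightarrow> \<bar>f j - f k\<bar> \<le> (\<Sum>i\<in>{j..<k}. \<bar>f i - f (Suc i)\<bar>)" for f :: "nat \<Rightarrow> real"
proof (induction k)
  case 0 then show ?case by simp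
next
  case (Suc k)
  show ?case
  proof (cases "j = Suc k")
    case True then show ?thesis by simp
  next
    case False
    then have "j \<le> k" using Suc.prems by simp
    then have "\<bar>f j - f (Suc k)\<bar> \<le> \<bar>f j - f k\<bar> + \<bar>f k - f (Suc k)\<bar>" by simp
    also have "\<dots> \<le> (\<Sum>i\<in>{j..<k}. \<bar>f i - f (Suc i)\<bar>) + \<bar>f k - f (Suc k)\<bar>"
      using Suc.IH \<open>j \<le> k\<close> by simp
    also have "\<dots> = (\<Sum>i\<in>{j..<Suc k}. \<bar>f i - f (Suc i)\<bar>)"
      using \<open>j \<le> k\<close> by simp
    finally show ?thesis .
  qed
qed

lemma chain: "(\<Sum>x<d. \<bar>W 0 x - W j x\<bar>) \<le> (\<Sum>k<j. \<Sum>x<d. \<bar>W k x - W (Suc k) x\<bar>)"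
  for W :: "nat \<Rightarrow> nat \<Rightarrow> real"
proof (induction j)
  case 0 then show ?case by simp
next
  case (Suc j)
  have "(\<Sum>x<d. \<bar>W 0 x - W (Suc j) x\<bar>) \<le> (\<Sum>x<d. \<bar>W 0 x - W j x\<bar> + \<bar>W j x - W (Suc j) x\<bar>)"
    by (rule sum_mono) simp
  also have "\<dots> = (\<Sum>x<d. \<bar>W 0 x - W j x\<bar>) + (\<Sum>x<d. \<bar>W j x - W (Suc j) x\<bar>)"
    by (simp add: sum.distrib)
  also have "\<dots> \<le> (\<Sum>k<Suc j. \<Sum>x<d. \<bar>W k x - W (Suc k) x\<bar>)"
    using Suc.IH by simp
  finally show ?case .
qed

lemma pair_bound:
  fixes q :: "nat \<Rightarrow> real"
  assumes "x < d" "y < d"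
  shows "2 * \<bar>q x - q y\<bar> \<le> (\<Sum>i<d. \<bar>q i - q ((i+1) mod d)\<bar>)"
proof -
  have key: "2 * \<bar>q x - q y\<bar> \<le> (\<Sum>i<d. \<bar>q i - q ((i+1) mod d)\<bar>)" if xy: "x \<le> y" "y < d" for x y
  proof -
    let ?g = "\<lambda>i. \<bar>q i - q ((i+1) mod d)\<bar>"
    have cong: "\<And>i. i < d - 1 \<Longrightarrow> ?g i = \<bar>q i - q (Suc i)\<bar>" by simp
    have s1: "(\<Sum>i\<in>{0..<x}. ?g i) \<ge> \<bar>q 0 - q x\<bar>"
    proof -
      have "(\<Sum>i\<in>{0..<x}. ?g i) = (\<Sum>i\<in>{0..<x}. \<bar>q i - q (Suc i)\<bar>)"
        by (rule sum.cong) (use xy in auto)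
      then show ?thesis using telescope[of 0 x q] by simp
    qed
    have s2: "(\<Sum>i\<in>{x..<y}. ?g i) \<ge> \<bar>q x - q y\<bar>"
    proof -
      have "(\<Sum>i\<in>{x..<y}. ?g i) = (\<Sum>i\<in>{x..<y}. \<bar>q i - q (Suc i)\<bar>)"
        by (rule sum.cong) (use xy in auto)
      then show ?thesis using telescope[of x y q] xy by simp
    qed
    have s3: "(\<Sum>i\<in>{y..<d}. ?g i) \<ge> \<bar>q y - q 0\<bar>"
    proof -
      have dd: "{y..<d} = insert (d-1) {y..<d-1}" using xy by auto
      have "(\<Sum>i\<in>{y..<d}. ?g i) = ?g (d-1) + (\<Sum>i\<in>{y..<d-1}. ?g i)"
        unfolding dd by simp
      also have "(\<Sum>i\<in>{y..<d-1}. ?g i) = (\<Sum>i\<in>{y..<d-1}. \<bar>q i - q (Suc i)\<bar>)"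
        by (rule sum.cong) (use xy in auto)
      also have "?g (d-1) = \<bar>q (d-1) - q 0\<bar>" using xy by simp
      finally have e: "(\<Sum>i\<in>{y..<d}. ?g i) = \<bar>q (d-1) - q 0\<bar> + (\<Sum>i\<in>{y..<d-1}. \<bar>q i - q (Suc i)\<bar>)" .
      have "\<bar>q y - q (d-1)\<bar> \<le> (\<Sum>i\<in>{y..<d-1}. \<bar>q i - q (Suc i)\<bar>)"
        using telescope[of y "d-1" q] xy by simp
      then show ?thesis unfolding e by linarith
    qed
    have split: "(\<Sum>i<d. ?g i) = (\<Sum>i\<in>{0..<x}. ?g i) + (\<Sum>i\<in>{x..<y}. ?g i) + (\<Sum>i\<in>{y..<d}. ?g i)"
      using sum.atLeastLessThan_concat[of 0 x y ?g] sum.atLeastLessThan_concat[of 0 y d ?g] xy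
      by (simp add: atLeast0LessThan)
    have "\<bar>q x - q y\<bar> \<le> \<bar>q 0 - q x\<bar> + \<bar>q y - q 0\<bar>" by arith
    then show ?thesis using s1 s2 s3 split by (smt (verit))
  qed
  show ?thesis
  proof (cases "x \<le> y")
    case True then show ?thesis using key assms by blast
  next
    case False then show ?thesis using key[of y x] assms by (simp add: abs_minus_commute)
  qed
qed

lemma mean_bound:
  fixes q :: "nat \<Rightarrow> real"
  assumes d0: "0 < d"
  shows "(\<Sum>x<d. \<bar>q x - 1/real d\<bar>) \<le> \<bar>1 - (\<Sum>x<d. q x)\<bar> + real d * (\<Sum>i<d. \<bar>q i - q ((i+1) mod d)\<bar>) / 4"
proof -
  define D where "D = (\<Sum>i<d. \<bar>q i - q ((i+1) mod d)\<bar>)"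
  define s where "s x = (if q x \<ge> 1/real d then 1 else -1::real)" for x
  define sb where "sb = (\<Sum>x<d. s x) / real d"
  define Mx where "Mx = Max (q ` {..<d})"
  define Mn where "Mn = Min (q ` {..<d})"
  define c where "c = (Mx + Mn) / 2"
  have fin: "finite (q ` {..<d})" by simp
  have ne: "q ` {..<d} \<noteq> {}" using d0 by auto
  obtain xa where xa: "xa < d" "q xa = Mx" using Max_in[OF fin ne] unfolding Mx_def by auto
  obtain xb where xb: "xb < d" "q xb = Mn" using Min_in[OF fin ne] unfolding Mn_def by auto
  have bnd: "Mn \<le> q x \<and> q x \<le> Mx" if "x < d" for x
    using that fin unfolding Mx_def Mn_def by (auto intro: Max_ge Min_le)
  have R: "2 * (Mx - Mn) \<le> D" using pair_bound[OF xa(1) xb(1), of q] xa xb bnd[OF xa(1)]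
    unfolding D_def by simp
  have qc: "\<bar>q x - c\<bar> \<le> D / 4" if "x < d" for x
    using bnd[OF that] R unfolding c_def by (auto simp: abs_if field_simps)
  have D0: "0 \<le> D" unfolding D_def by (simp add: sum_nonneg)
  have ssum: "(\<Sum>x<d. s x) = real d * sb" unfolding sb_def using d0 by simp
  have "\<bar>\<Sum>x<d. s x\<bar> \<le> (\<Sum>x<d. \<bar>s x\<bar>)" by (rule sum_abs)
  also have "\<dots> = (\<Sum>x<d. 1)" by (rule sum.cong) (auto simp: s_def)
  also have "\<dots> = real d" by simp
  finally have hs: "\<bar>\<Sum>x<d. s x\<bar> \<le> real d" .
  have sb1: "\<bar>sb\<bar> \<le> 1"
  proof -
    have "\<bar>sb\<bar> = \<bar>\<Sum>x<d. s x\<bar> / real d" unfolding sb_def by simp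
    also have "\<dots> \<le> real d / real d" by (rule divide_right_mono[OF hs]) simp
    also have "\<dots> = 1" using d0 by simp
    finally show ?thesis .
  qed
  have abs_s: "\<bar>s x - sb\<bar> = 1 - s x * sb" for x
  proof (cases "1/real d \<le> q x")
    case True then have "s x = 1" by (simp add: s_def)
    then show ?thesis using sb1 by (simp add: abs_if split: if_splits)
  next
    case False then have "s x = -1" by (simp add: s_def)
    then show ?thesis using sb1 by (simp add: abs_if split: if_splits)
  qed
  have "(\<Sum>x<d. \<bar>s x - sb\<bar>) = (\<Sum>x<d. 1 - s x * sb)" by (simp add: abs_s)
  also have "\<dots> = real d - sb * (\<Sum>x<d. s x)" by (simp add: sum_subtractf sum_distrib_left mult.commute)
  also have "\<dots> = real d - real d * sb^2" by (simp add: ssum power2_eq_square)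
  also have "\<dots> \<le> real d" by simp
  finally have sabs: "(\<Sum>x<d. \<bar>s x - sb\<bar>) \<le> real d" .
  have eq1: "(\<Sum>x<d. \<bar>q x - 1/real d\<bar>) = (\<Sum>x<d. s x * (q x - 1/real d))"
    by (rule sum.cong) (auto simp: s_def)
  have e2: "(\<Sum>x<d. s x * (q x - 1/real d)) = (\<Sum>x<d. s x * q x) - (\<Sum>x<d. s x) / real d"
    by (simp add: right_diff_distrib sum_subtractf sum_divide_distrib)
  have e3: "(\<Sum>x<d. (s x - sb) * (q x - c)) = (\<Sum>x<d. s x * q x) - c * (\<Sum>x<d. s x) - sb * (\<Sum>x<d. q x) + real d * sb * c"
  proof -
    have "(\<Sum>x<d. (s x - sb) * (q x - c)) = (\<Sum>x<d. s x * q x - c * s x - sb * q x + sb * c)"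
      by (rule sum.cong) (simp_all add: algebra_simps)
    also have "\<dots> = (\<Sum>x<d. s x * q x) - c * (\<Sum>x<d. s x) - sb * (\<Sum>x<d. q x) + real d * sb * c"
      by (simp add: sum.distrib sum_subtractf sum_distrib_left)
    finally show ?thesis .
  qed
  have eq2: "(\<Sum>x<d. s x * (q x - 1/real d)) = (\<Sum>x<d. (s x - sb) * (q x - c)) - sb * (1 - (\<Sum>x<d. q x))"
  proof -
    have "(\<Sum>x<d. s x) / real d = sb" using ssum d0 by simp
    then have a: "(\<Sum>x<d. s x * (q x - 1/real d)) = (\<Sum>x<d. s x * q x) - sb" using e2 by simp
    have b: "(\<Sum>x<d. (s x - sb) * (q x - c)) = (\<Sum>x<d. s x * q x) - sb * (\<Sum>x<d. q x)"
      using e3 unfolding ssum by simp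
    show ?thesis unfolding a b by (simp add: right_diff_distrib)
  qed
  have "(\<Sum>x<d. (s x - sb) * (q x - c)) \<le> (\<Sum>x<d. \<bar>s x - sb\<bar> * (D/4))"
  proof (rule sum_mono)
    fix x assume "x \<in> {..<d}"
    then have "\<bar>q x - c\<bar> \<le> D/4" using qc by simp
    then have "\<bar>s x - sb\<bar> * \<bar>q x - c\<bar> \<le> \<bar>s x - sb\<bar> * (D/4)" by (rule mult_left_mono) simp_all
    moreover have "(s x - sb) * (q x - c) \<le> \<bar>s x - sb\<bar> * \<bar>q x - c\<bar>"
      using abs_ge_self[of "(s x - sb) * (q x - c)"] by (simp add: abs_mult)
    ultimately show "(s x - sb) * (q x - c) \<le> \<bar>s x - sb\<bar> * (D/4)" by linarith
  qed
  also have "\<dots> = (\<Sum>x<d. \<bar>s x - sb\<bar>) * (D/4)" by (simp add: sum_distrib_right)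
  also have "\<dots> \<le> real d * (D/4)" using sabs D0 by (simp add: mult_right_mono)
  finally have b1: "(\<Sum>x<d. (s x - sb) * (q x - c)) \<le> real d * (D/4)" .
  have b2: "- sb * (1 - (\<Sum>x<d. q x)) \<le> \<bar>1 - (\<Sum>x<d. q x)\<bar>"
  proof -
    have "\<bar>sb * (1 - (\<Sum>x<d. q x))\<bar> \<le> \<bar>1 - (\<Sum>x<d. q x)\<bar>"
      unfolding abs_mult using sb1 by (simp add: mult_left_le_one_le)
    then show ?thesis by linarith
  qed
  show ?thesis using eq1 eq2 b1 b2 unfolding D_def by simp
qed

definition ev :: "nat \<Rightarrow> nat" where "ev k = (if even k then k else Suc k)"
definition od :: "nat \<Rightarrow> nat" where "od k = (if even k then Suc k else k)"

lemma finA: "finite (A_set n)"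
  by (rule finite_subset[of _ "{..<2*n}"]) (auto simp: A_set_def)
lemma finB: "finite (B_set n)"
  by (rule finite_subset[of _ "{..<2*n}"]) (auto simp: B_set_def)

lemma pairs_sum:
  fixes T :: "nat \<Rightarrow> nat \<Rightarrow> real"
  shows "(\<Sum>a\<in>A_set n. \<Sum>b\<in>B_set n. if a = b + 1 \<or> b = a + 1 then T a b else 0)
       = (\<Sum>k<2*n-1. T (ev k) (od k))"
proof -
  let ?S = "{pr \<in> A_set n \<times> B_set n. fst pr = snd pr + 1 \<or> snd pr = fst pr + 1}"
  have "(\<Sum>a\<in>A_set n. \<Sum>b\<in>B_set n. if a = b + 1 \<or> b = a + 1 then T a b else 0)
      = (\<Sum>pr\<in>A_set n \<times> B_set n. if fst pr = snd pr + 1 \<or> snd pr = fst pr + 1 then T (fst pr) (snd pr) else 0)"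
    by (simp add: sum.cartesian_product case_prod_beta)
  also have "\<dots> = (\<Sum>pr\<in>?S. T (fst pr) (snd pr))"
    by (rule sum.inter_filter[symmetric]) (simp add: finA finB)
  also have "?S = (\<lambda>k. (ev k, od k)) ` {..<2*n-1}"
  proof
    show "?S \<subseteq> (\<lambda>k. (ev k, od k)) ` {..<2*n-1}"
    proof
      fix pr assume "pr \<in> ?S"
      then obtain a b where pr: "pr = (a,b)" "even a" "a < 2*n" "odd b" "b < 2*n" "a = b + 1 \<or> b = a + 1"
        by (cases pr) (auto simp: A_set_def B_set_def)
      show "pr \<in> (\<lambda>k. (ev k, od k)) ` {..<2*n-1}"
      proof (cases "b = a + 1")
        case True
        then have "pr = (ev a, od a)" "a < 2*n-1" using pr by (auto simp: ev_def od_def)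
        then show ?thesis by blast
      next
        case False
        then have "a = b + 1" using pr by auto
        then have "pr = (ev b, od b)" "b < 2*n-1" using pr by (auto simp: ev_def od_def)
        then show ?thesis by blast
      qed
    qed
  next
    show "(\<lambda>k. (ev k, od k)) ` {..<2*n-1} \<subseteq> ?S"
      by (auto simp: ev_def od_def A_set_def B_set_def split: if_splits)
  qed
  also have "(\<Sum>pr\<in>(\<lambda>k. (ev k, od k)) ` {..<2*n-1}. T (fst pr) (snd pr)) = (\<Sum>k<2*n-1. T (ev k) (od k))"
  proof (subst sum.reindex)
    show "inj_on (\<lambda>k. (ev k, od k)) {..<2 * n - 1}"
      by (rule inj_onI) (auto simp: ev_def od_def split: if_splits)
  qed simp
  finally show ?thesis .
qed

lemma Ieq:
  assumes "n \<ge> 1"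
  shows "I_nd n d P = (1 - (\<Sum>x<d. P x ((x+1) mod d) 0 (2*n-1)))
           + (\<Sum>k<2*n-1. 1 - (\<Sum>x<d. P x x (ev k) (od k)))"
proof -
  have "I_nd n d P = 2 * real n - (\<Sum>x<d. P x ((x+1) mod d) 0 (2*n-1))
      - (\<Sum>k<2*n-1. (\<Sum>x<d. P x x (ev k) (od k)))"
    unfolding I_nd_def pairs_sum by simp
  moreover have "(\<Sum>k<2*n-1. 1 - (\<Sum>x<d. P x x (ev k) (od k))) = real (2*n-1) - (\<Sum>k<2*n-1. (\<Sum>x<d. P x x (ev k) (od k)))"
    by (simp add: sum_subtractf)
  moreover have "real (2*n-1) = 2 * real n - 1" using assms by (simp add: of_nat_diff)
  ultimately show ?thesis by simp
qed

lemma comb: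
  fixes p :: "'l \<Rightarrow> nat \<Rightarrow> nat \<Rightarrow> nat \<Rightarrow> nat \<Rightarrow> real"
  assumes n1: "n \<ge> 1" and d0: "0 < d"
    and nonneg: "\<And>x y a b. p l x y a b \<ge> 0"
    and norm: "\<And>a b. (\<Sum>x\<in>{0..d}. \<Sum>y\<in>{0..d}. p l x y a b) = 1"
    and nsX: "\<forall>a\<in>A_set n. \<forall>b\<in>B_set n. \<forall>x<d. PX_ABL d p l x a b = PX_ABL d p l x a (2*n-1)"
    and nsY: "\<forall>a\<in>A_set n. \<forall>b\<in>B_set n. \<forall>x<d. PY_ABL d p l x a b = PY_ABL d p l x 0 b"
  shows "(\<Sum>x<d. \<bar>PX_ABL d p l x 0 (2*n-1) - 1/real d\<bar>) \<le> real d / 2 * I_nd n d (p l)"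
proof -
  define N where "N = 2*n-1"
  have N1: "N \<ge> 1" "odd N" using n1 unfolding N_def by auto
  have NB: "N \<in> B_set n" using n1 unfolding N_def B_set_def by auto
  have A0: "0 \<in> A_set n" using n1 unfolding A_set_def by auto
  define V where "V k x = (if even k then PX_ABL d p l x k N else PY_ABL d p l x 0 k)" for k x
  define t where "t k = 1 - (\<Sum>x<d. V k x)" for k
  define u where "u k = 1 - (\<Sum>x<d. p l x x (ev k) (od k))" for k
  define u' where "u' = 1 - (\<Sum>x<d. p l x ((x+1) mod d) 0 N)"
  define lk where "lk k = (\<Sum>x<d. \<bar>V k x - V (Suc k) x\<bar>)" for k
  define l' where "l' = (\<Sum>x<d. \<bar>V 0 x - V N ((x+1) mod d)\<bar>)"
  define D where "D = (\<Sum>x<d. \<bar>V 0 x - V 0 ((x+1) mod d)\<bar>)"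
  have le_PX: "p l x y a b \<le> PX_ABL d p l x a b" if "y \<le> d" for x y a b
    unfolding PX_ABL_def by (rule member_le_sum) (use that nonneg in auto)
  have le_PY: "p l x y a b \<le> PY_ABL d p l y a b" if "x \<le> d" for x y a b
    unfolding PY_ABL_def by (rule member_le_sum) (use that nonneg in auto)
  have sumPX: "(\<Sum>x<d. PX_ABL d p l x a b) \<le> 1" for a b
  proof -
    have "(\<Sum>x<d. PX_ABL d p l x a b) \<le> (\<Sum>x\<in>{0..d}. PX_ABL d p l x a b)"
      by (rule sum_mono2) (auto simp: PX_ABL_def nonneg sum_nonneg)
    also have "\<dots> = 1" using norm unfolding PX_ABL_def by simp
    finally show ?thesis .
  qed
  have sumPY: "(\<Sum>y<d. PY_ABL d p l y a b) \<le> 1" for a b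
  proof -
    have "(\<Sum>y<d. PY_ABL d p l y a b) \<le> (\<Sum>y\<in>{0..d}. PY_ABL d p l y a b)"
      by (rule sum_mono2) (auto simp: PY_ABL_def nonneg sum_nonneg)
    also have "\<dots> = (\<Sum>x\<in>{0..d}. \<Sum>y\<in>{0..d}. p l x y a b)"
      unfolding PY_ABL_def by (rule sum.swap)
    also have "\<dots> = 1" using norm by simp
    finally show ?thesis .
  qed
  have t0: "t k \<ge> 0" for k
    using sumPX sumPY unfolding t_def V_def by (cases "even k") auto
  have Iu: "I_nd n d (p l) = u' + (\<Sum>k<N. u k)"
    unfolding Ieq[OF n1] u'_def u_def N_def by simp
  have edge: "2 * u k \<ge> t k + t (Suc k) + lk k" if kN: "k < N" for k
  proof -
    have ab: "ev k \<in> A_set n" "od k \<in> B_set n"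
      using kN unfolding N_def A_set_def B_set_def ev_def od_def by auto
    have pt: "2 * p l x x (ev k) (od k) \<le> V k x + V (Suc k) x - \<bar>V k x - V (Suc k) x\<bar>"
      if x: "x < d" for x
    proof -
      have "p l x x (ev k) (od k) \<le> V k x \<and> p l x x (ev k) (od k) \<le> V (Suc k) x"
      proof (cases "even k")
        case True
        then have "V k x = PX_ABL d p l x (ev k) (od k)" "V (Suc k) x = PY_ABL d p l x (ev k) (od k)"
          using nsX ab x nsY unfolding V_def ev_def od_def N_def by auto
        then show ?thesis using le_PX[of x x] le_PY[of x x] x by simp
      next
        case False
        then have "V k x = PY_ABL d p l x (ev k) (od k)" "V (Suc k) x = PX_ABL d p l x (ev k) (od k)"
          using nsX ab x nsY unfolding V_def ev_def od_def N_def by auto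
        then show ?thesis using le_PX[of x x] le_PY[of x x] x by simp
      qed
      then show ?thesis by (simp add: abs_if)
    qed
    have "2 * (\<Sum>x<d. p l x x (ev k) (od k)) \<le> (\<Sum>x<d. V k x + V (Suc k) x - \<bar>V k x - V (Suc k) x\<bar>)"
      unfolding sum_distrib_left by (rule sum_mono) (use pt in auto)
    also have "\<dots> = (\<Sum>x<d. V k x) + (\<Sum>x<d. V (Suc k) x) - lk k"
      unfolding lk_def by (simp add: sum.distrib sum_subtractf)
    finally show ?thesis unfolding u_def t_def by simp
  qed
  have sedge: "2 * u' \<ge> t 0 + t N + l'"
  proof -
    have pt: "2 * p l x ((x+1) mod d) 0 N \<le> V 0 x + V N ((x+1) mod d) - \<bar>V 0 x - V N ((x+1) mod d)\<bar>"
      if x: "x < d" for x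
    proof -
      have "V 0 x = PX_ABL d p l x 0 N" "V N ((x+1) mod d) = PY_ABL d p l ((x+1) mod d) 0 N"
        using N1 unfolding V_def by auto
      moreover have "(x+1) mod d \<le> d" using d0 by (simp add: less_imp_le)
      ultimately have "p l x ((x+1) mod d) 0 N \<le> V 0 x \<and> p l x ((x+1) mod d) 0 N \<le> V N ((x+1) mod d)"
        using le_PX le_PY x by simp
      then show ?thesis by (simp add: abs_if)
    qed
    have "2 * (\<Sum>x<d. p l x ((x+1) mod d) 0 N) \<le> (\<Sum>x<d. V 0 x + V N ((x+1) mod d) - \<bar>V 0 x - V N ((x+1) mod d)\<bar>)"
      unfolding sum_distrib_left by (rule sum_mono) (use pt in auto)
    also have "\<dots> = (\<Sum>x<d. V 0 x) + (\<Sum>x<d. V N ((x+1) mod d)) - l'"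
      unfolding l'_def by (simp add: sum.distrib sum_subtractf)
    also have "(\<Sum>x<d. V N ((x+1) mod d)) = (\<Sum>x<d. V N x)" by (rule shift_sum[OF d0])
    finally show ?thesis unfolding u'_def t_def by simp
  qed
  have ch: "(\<Sum>x<d. \<bar>V 0 x - V N x\<bar>) \<le> (\<Sum>k<N. lk k)"
    unfolding lk_def by (rule chain)
  have Dle: "D \<le> (\<Sum>x<d. \<bar>V 0 x - V N x\<bar>) + l'"
  proof -
    have "(\<Sum>x<d. \<bar>V 0 x - V N x\<bar>) = (\<Sum>x<d. \<bar>V 0 ((x+1) mod d) - V N ((x+1) mod d)\<bar>)"
      by (rule shift_sum[OF d0, symmetric])
    moreover have "D \<le> (\<Sum>x<d. \<bar>V 0 ((x+1) mod d) - V N ((x+1) mod d)\<bar> + \<bar>V 0 x - V N ((x+1) mod d)\<bar>)"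
      unfolding D_def by (rule sum_mono) linarith
    ultimately show ?thesis unfolding l'_def by (simp add: sum.distrib)
  qed
  have lk0: "lk k \<ge> 0" for k unfolding lk_def by (simp add: sum_nonneg)
  have l'0: "l' \<ge> 0" unfolding l'_def by (simp add: sum_nonneg)
  have sum_edges: "2 * (\<Sum>k<N. u k) \<ge> (\<Sum>k<N. t k + t (Suc k)) + (\<Sum>k<N. lk k)"
  proof -
    have "(\<Sum>k<N. t k + t (Suc k) + lk k) \<le> (\<Sum>k<N. 2 * u k)"
      by (rule sum_mono) (use edge in auto)
    then show ?thesis by (simp add: sum.distrib sum_distrib_left)
  qed
  have st: "(\<Sum>k<N. t k + t (Suc k)) \<ge> t 0"
  proof -
    have "t 0 + t (Suc 0) \<le> (\<Sum>k<N. t k + t (Suc k))"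
      by (rule member_le_sum[where f="\<lambda>k. t k + t (Suc k)"]) (use N1 t0 in \<open>auto intro: add_nonneg_nonneg\<close>)
    then show ?thesis using t0[of "Suc 0"] by simp
  qed
  have A: "2 * I_nd n d (p l) \<ge> 2 * t 0 + D"
    using Iu sedge sum_edges st ch Dle t0[of N] by linarith
  have B: "I_nd n d (p l) \<ge> 2 * t 0"
  proof -
    have ge1: "\<bar>(\<Sum>x<d. V 0 x) - (\<Sum>x<d. V (Suc 0) x)\<bar> \<le> lk 0"
      unfolding lk_def sum_subtractf[symmetric] by (rule sum_abs)
    have ge2: "\<bar>(\<Sum>x<d. V 0 x) - (\<Sum>x<d. V N ((x+1) mod d))\<bar> \<le> l'"
      unfolding l'_def sum_subtractf[symmetric] by (rule sum_abs)
    have sh: "(\<Sum>x<d. V N ((x+1) mod d)) = (\<Sum>x<d. V N x)" by (rule shift_sum[OF d0])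
    have u0: "u 0 \<ge> t 0" using edge[of 0] N1 ge1 unfolding t_def by (simp add: abs_if split: if_splits)
    have u'0: "u' \<ge> t 0" using sedge ge2 sh unfolding t_def by (simp add: abs_if split: if_splits)
    have uge: "0 \<le> u k" if "k < N" for k
      using edge[OF that] t0[of k] t0[of "Suc k"] lk0[of k] by linarith
    have "u 0 \<le> (\<Sum>k<N. u k)"
      by (rule member_le_sum) (use N1 uge in auto)
    then show ?thesis using Iu u0 u'0 by linarith
  qed
  have LHS: "(\<Sum>x<d. \<bar>PX_ABL d p l x 0 (2*n-1) - 1/real d\<bar>) \<le> t 0 + real d * D / 4"
  proof -
    have "(\<Sum>x<d. \<bar>PX_ABL d p l x 0 (2*n-1) - 1/real d\<bar>) = (\<Sum>x<d. \<bar>V 0 x - 1/real d\<bar>)"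
      unfolding V_def N_def by simp
    also have "\<dots> \<le> \<bar>1 - (\<Sum>x<d. V 0 x)\<bar> + real d * D / 4"
      unfolding D_def by (rule mean_bound[OF d0])
    also have "\<bar>1 - (\<Sum>x<d. V 0 x)\<bar> = t 0" using t0[of 0] unfolding t_def by simp
    finally show ?thesis .
  qed
  show ?thesis
  proof (cases "d = 1")
    case True
    then have "D = 0" unfolding D_def by simp
    then show ?thesis using LHS B True by simp
  next
    case False
    then have d2: "real d \<ge> 2" using d0 by simp
    have "t 0 \<le> real d / 2 * t 0" using d2 t0[of 0] by (simp add: mult_right_mono[of 1 "real d / 2" "t 0", simplified])
    moreover have "real d / 2 * (t 0 + D / 2) \<le> real d / 2 * I_nd n d (p l)"
      by (rule mult_left_mono) (use A d2 in auto)
    ultimately show ?thesis using LHS by (simp add: algebra_simps)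
  qed
qed

theorem lemma2:
  fixes n d :: nat
    and M :: "'l measure"
    and pA pB :: "nat pmf"
    and p :: "'l \<Rightarrow> nat \<Rightarrow> nat \<Rightarrow> nat \<Rightarrow> nat \<Rightarrow> real"
  assumes n_pos: "n \<ge> 1"
    and prob: "prob_space M"
    and meas: "\<And>x y a b. (\<lambda>l. p l x y a b) \<in> borel_measurable M"
    and nonneg: "\<And>l x y a b. p l x y a b \<ge> 0"
    and normalized: "\<And>l a b. (\<Sum>x\<in>{0..d}. \<Sum>y\<in>{0..d}. p l x y a b) = 1"
    and nosig_X: "\<And>a b b' x. a \<in> set_pmf pA \<Longrightarrow> b \<in> set_pmf pB \<Longrightarrow> b' \<in> set_pmf pB \<Longrightarrow>
                    AE l in M. PX_ABL d p l x a b = PX_ABL d p l x a b'"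
    and nosig_Y: "\<And>a a' b y. a \<in> set_pmf pA \<Longrightarrow> a' \<in> set_pmf pA \<Longrightarrow> b \<in> set_pmf pB \<Longrightarrow>
                    AE l in M. PY_ABL d p l y a b = PY_ABL d p l y a' b"
    and suppA: "A_set n \<subseteq> set_pmf pA"
    and suppB: "B_set n \<subseteq> set_pmf pB"
  shows "(\<integral>l. (\<Sum>x<d. \<bar>PX_ABL d p l x 0 (2*n - 1) - 1 / real d\<bar>) \<partial>M)
           \<le> real d / 2 * I_nd n d (PXY_AB M p)"
proof (cases "d = 0")
  case True then show ?thesis by simp
next
  case False
  then have d0: "0 < d" by simp
  interpret prob_space M by (rule prob)
  have NB: "2*n-1 \<in> B_set n" using n_pos unfolding B_set_def by auto
  have A0: "0 \<in> A_set n" using n_pos unfolding A_set_def by auto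
  have bnd: "p l x y a b \<le> 1" if "x \<le> d" "y \<le> d" for l x y a b
  proof -
    have "p l x y a b \<le> (\<Sum>y\<in>{0..d}. p l x y a b)"
      by (rule member_le_sum) (use that nonneg in auto)
    also have "\<dots> \<le> (\<Sum>x\<in>{0..d}. \<Sum>y\<in>{0..d}. p l x y a b)"
      by (rule member_le_sum[where f="\<lambda>x. \<Sum>y\<in>{0..d}. p l x y a b"]) (use that nonneg in \<open>auto intro: sum_nonneg\<close>)
    finally show ?thesis using normalized by simp
  qed
  have intp: "integrable M (\<lambda>l. p l x y a b)" if "x \<le> d" "y \<le> d" for x y a b
    by (rule integrable_const_bound[where B=1]) (use bnd[OF that] nonneg meas in auto)
  have intp1: "integrable M (\<lambda>l. p l x x a b)" if "x < d" for x a b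
    using intp that by simp
  have intp2: "integrable M (\<lambda>l. p l x ((x+1) mod d) a b)" if "x < d" for x a b
    using intp that d0 by (simp add: less_imp_le)
  have intp2': "integrable M (\<lambda>l. p l x (Suc x mod d) a b)" if "x < d" for x a b
    using intp2[OF that] by simp
  have AEns: "AE l in M. (\<forall>a\<in>A_set n. \<forall>b\<in>B_set n. \<forall>x<d. PX_ABL d p l x a b = PX_ABL d p l x a (2*n-1))
       \<and> (\<forall>a\<in>A_set n. \<forall>b\<in>B_set n. \<forall>x<d. PY_ABL d p l x a b = PY_ABL d p l x 0 b)"
  proof -
    have X: "AE l in M. \<forall>a\<in>A_set n. \<forall>b\<in>B_set n. \<forall>x\<in>{..<d}. PX_ABL d p l x a b = PX_ABL d p l x a (2*n-1)"
      by (intro AE_finite_allI finA finB finite_lessThan nosig_X) (use suppA suppB NB in auto)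
    have Y: "AE l in M. \<forall>a\<in>A_set n. \<forall>b\<in>B_set n. \<forall>x\<in>{..<d}. PY_ABL d p l x a b = PY_ABL d p l x 0 b"
      by (intro AE_finite_allI finA finB finite_lessThan nosig_Y) (use suppA suppB A0 in auto)
    show ?thesis using X Y by eventually_elim auto
  qed
  have AEle: "AE l in M. (\<Sum>x<d. \<bar>PX_ABL d p l x 0 (2*n - 1) - 1 / real d\<bar>) \<le> real d / 2 * I_nd n d (p l)"
    using AEns by eventually_elim (rule comb[OF n_pos d0 nonneg normalized], auto)
  have intF: "integrable M (\<lambda>l. \<Sum>x<d. \<bar>PX_ABL d p l x 0 (2*n - 1) - 1 / real d\<bar>)"
  proof (rule Bochner_Integration.integrable_sum)
    fix x assume x: "x \<in> {..<d}"
    have "integrable M (\<lambda>l. PX_ABL d p l x 0 (2*n - 1))"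
      unfolding PX_ABL_def by (rule Bochner_Integration.integrable_sum) (use x in \<open>auto intro: intp\<close>)
    then show "integrable M (\<lambda>l. \<bar>PX_ABL d p l x 0 (2*n - 1) - 1 / real d\<bar>)"
      by (intro integrable_abs Bochner_Integration.integrable_diff integrable_const)
  qed
  let ?G = "\<lambda>l. real d / 2 * ((1 - (\<Sum>x<d. p l x ((x+1) mod d) 0 (2*n-1)))
           + (\<Sum>k<2*n-1. 1 - (\<Sum>x<d. p l x x (ev k) (od k))))"
  have Geq: "real d / 2 * I_nd n d (p l) = ?G l" for l unfolding Ieq[OF n_pos] ..
  have i1: "integrable M (\<lambda>l. \<Sum>x<d. p l x ((x+1) mod d) 0 (2*n-1))"
    by (rule Bochner_Integration.integrable_sum) (auto intro: intp2 intp2')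
  have i3: "integrable M (\<lambda>l. \<Sum>x<d. p l x x (ev k) (od k))" for k
    by (rule Bochner_Integration.integrable_sum) (auto intro: intp1)
  have i4: "integrable M (\<lambda>l. 1 - (\<Sum>x<d. p l x x (ev k) (od k)))" for k
    by (intro Bochner_Integration.integrable_diff integrable_const i3)
  have i2: "integrable M (\<lambda>l. \<Sum>k<2*n-1. 1 - (\<Sum>x<d. p l x x (ev k) (od k)))"
    by (rule Bochner_Integration.integrable_sum) (rule i4)
  have i5: "integrable M (\<lambda>l. 1 - (\<Sum>x<d. p l x ((x+1) mod d) 0 (2*n-1)))"
    by (intro Bochner_Integration.integrable_diff integrable_const i1)
  have intG: "integrable M ?G"
    by (intro integrable_mult_right Bochner_Integration.integrable_add i5 i2)
  have e1: "(\<integral>l. (\<Sum>x<d. p l x ((x+1) mod d) 0 (2*n-1)) \<partial>M) = (\<Sum>x<d. PXY_AB M p x ((x+1) mod d) 0 (2*n-1))"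
    unfolding PXY_AB_def by (rule Bochner_Integration.integral_sum) (auto intro: intp2 intp2')
  have e3: "(\<integral>l. (\<Sum>x<d. p l x x (ev k) (od k)) \<partial>M) = (\<Sum>x<d. PXY_AB M p x x (ev k) (od k))" for k
    unfolding PXY_AB_def by (rule Bochner_Integration.integral_sum) (auto intro: intp1)
  have e4: "(\<integral>l. 1 - (\<Sum>x<d. p l x x (ev k) (od k)) \<partial>M) = 1 - (\<Sum>x<d. PXY_AB M p x x (ev k) (od k))" for k
    using e3[of k] i3[of k] by (simp add: Bochner_Integration.integral_diff prob_space)
  have e5: "(\<integral>l. 1 - (\<Sum>x<d. p l x ((x+1) mod d) 0 (2*n-1)) \<partial>M) = 1 - (\<Sum>x<d. PXY_AB M p x ((x+1) mod d) 0 (2*n-1))"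
    using e1 i1 by (simp add: Bochner_Integration.integral_diff prob_space)
  have e2: "(\<integral>l. (\<Sum>k<2*n-1. 1 - (\<Sum>x<d. p l x x (ev k) (od k))) \<partial>M) = (\<Sum>k<2*n-1. 1 - (\<Sum>x<d. PXY_AB M p x x (ev k) (od k)))"
    by (subst Bochner_Integration.integral_sum) (use i4 e4 in auto)
  have intG_val: "(\<integral>l. ?G l \<partial>M) = real d / 2 * I_nd n d (PXY_AB M p)"
    unfolding Ieq[OF n_pos]
    by (subst Bochner_Integration.integral_mult_right) (use i5 i2 e5 e2 in \<open>simp_all add: Bochner_Integration.integral_add\<close>)
  have "(\<integral>l. (\<Sum>x<d. \<bar>PX_ABL d p l x 0 (2*n - 1) - 1 / real d\<bar>) \<partial>M) \<le> (\<integral>l. ?G l \<partial>M)"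
    by (rule integral_mono_AE[OF intF intG]) (use AEle in \<open>simp only: Geq\<close>)
  then show ?thesis by (simp only: intG_val)
qed

end
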